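(* Let $K$ be a finite set (of origin–destination pairs) and, for each $k \in K$, let $T_k$ be a finite nonempty set (of departure time options) and $Q_k > 0$ a given demand. A flow vector is $\mathbf{Q} = \{q_k(t) : k \in K, t \in T_k\}$, and for each flow vector let $C_k(t) = C_k(t;\mathbf{Q}) \in \mathbb{R}$ be given average travel costs, an arbitrary function of $\mathbf{Q}$. Consider the nonlinear mathematical program (NMP) in the variables $\mathbf{Q}$ and $\boldsymbol{\rho} = \{\rho_k : k \in K\}$: $$\min_{\mathbf{Q},\boldsymbol{\rho}} \ \zeta(\mathbf{Q},\boldsymbol{\rho}) = \sum_{k \in K}\sum_{t \in T_k} \big(C_k(t;\mathbf{Q}) - \rho_k\big)\, q_k(t)$$ subject to $C_k(t;\mathbf{Q}) - \rho_k \ge 0$ for all $k \in K, t \in T_k$; $q_k(t) \ge 0$ for all $k\in K, t \in T_k$; $Q_k - \sum_{t \in T_k} q_k(t) = 0$ for all $k \in K$; and $\rho_k \ge 0$ for all $k \in K$. If $(\mathbf{Q}^*, \boldsymbol{\rho}^* )$ is an optimal solution of this NMP, then for every $k \in K$, $$\rho_k^* = \min_{t \in T_k} C_k(t;\mathbf{Q}^* ).$$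
   Context: This is a departure-time user-equilibrium model for public transport: $K$ is the set of origin–destination (OD) pairs, $T_k$ the set of train departure times available at the origin of OD pair $k$, $Q_k$ the total demand of OD pair $k$, $q_k(t)$ the number of users of OD pair $k$ choosing departure time $t$, and $C_k(t;\mathbf{Q})$ the average generalized travel cost of option $(k,t)$ under flow distribution $\mathbf{Q}$ (in the paper computed by a network-loading simulation; here it may be any function of $\mathbf{Q}$). The variables $\rho_k$ are auxiliary per-OD cost levels. *)

theory Defs
  imports Main "HOL-Library.FuncSet" Complex_Main
begin

text \<open>A flow vector is represented as q :: 'k => 't => real, with q k t meaningful for
  k in K and t in T k; canonically q k t = 0 elsewhere (so a flow vector is exactly the
  family indexed by the pairs (k,t)). Likewise rho k = 0 outside K.\<close>

definition zeta ::
  "'k set \<Rightarrow> ('k \<Rightarrow> 't set) \<Rightarrow> (('k \<Rightarrow> 't \<Rightarrow> real) \<Rightarrow> 'k \<Rightarrow> 't \<Rightarrow> real)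
    \<Rightarrow> ('k \<Rightarrow> 't \<Rightarrow> real) \<Rightarrow> ('k \<Rightarrow> real) \<Rightarrow> real" where
  "zeta K T C q \<rho> = (\<Sum>k\<in>K. \<Sum>t\<in>T k. (C q k t - \<rho> k) * q k t)"

definition nmp_feasible ::
  "'k set \<Rightarrow> ('k \<Rightarrow> 't set) \<Rightarrow> ('k \<Rightarrow> real) \<Rightarrow> (('k \<Rightarrow> 't \<Rightarrow> real) \<Rightarrow> 'k \<Rightarrow> 't \<Rightarrow> real)
    \<Rightarrow> ('k \<Rightarrow> 't \<Rightarrow> real) \<Rightarrow> ('k \<Rightarrow> real) \<Rightarrow> bool" where
  "nmp_feasible K T D C q \<rho> \<longleftrightarrow>
     (\<forall>k t. (k \<notin> K \<or> t \<notin> T k) \<longrightarrow> q k t = 0) \<and>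
     (\<forall>k. k \<notin> K \<longrightarrow> \<rho> k = 0) \<and>
     (\<forall>k\<in>K. \<forall>t\<in>T k. C q k t - \<rho> k \<ge> 0) \<and>
     (\<forall>k\<in>K. \<forall>t\<in>T k. q k t \<ge> 0) \<and>
     (\<forall>k\<in>K. D k - (\<Sum>t\<in>T k. q k t) = 0) \<and>
     (\<forall>k\<in>K. \<rho> k \<ge> 0)"

definition nmp_optimal ::
  "'k set \<Rightarrow> ('k \<Rightarrow> 't set) \<Rightarrow> ('k \<Rightarrow> real) \<Rightarrow> (('k \<Rightarrow> 't \<Rightarrow> real) \<Rightarrow> 'k \<Rightarrow> 't \<Rightarrow> real)
    \<Rightarrow> ('k \<Rightarrow> 't \<Rightarrow> real) \<Rightarrow> ('k \<Rightarrow> real) \<Rightarrow> bool" where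
  "nmp_optimal K T D C q \<rho> \<longleftrightarrow>
     nmp_feasible K T D C q \<rho> \<and>
     (\<forall>q' \<rho>'. nmp_feasible K T D C q' \<rho>' \<longrightarrow> zeta K T C q \<rho> \<le> zeta K T C q' \<rho>')"

end

theory Submission
  imports Defs
begin

theorem proposition2:
  fixes K :: "'k set" and T :: "'k \<Rightarrow> 't set" and D :: "'k \<Rightarrow> real"
    and C :: "('k \<Rightarrow> 't \<Rightarrow> real) \<Rightarrow> 'k \<Rightarrow> 't \<Rightarrow> real"
    and qs :: "'k \<Rightarrow> 't \<Rightarrow> real" and \<rho>s :: "'k \<Rightarrow> real"
  assumes fK: "finite K"
    and fT: "\<And>k. k \<in> K \<Longrightarrow> finite (T k) \<and> T k \<noteq> {}"
    and Dp: "\<And>k. k \<in> K \<Longrightarrow> D k > 0"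
    and opt: "nmp_optimal K T D C qs \<rho>s"
  shows "\<forall>k\<in>K. \<rho>s k = Min ((\<lambda>t. C qs k t) ` T k)"
proof -
  define m where "m k = (if k \<in> K then Min ((\<lambda>t. C qs k t) ` T k) else 0)" for k
  have feas: "nmp_feasible K T D C qs \<rho>s" using opt unfolding nmp_optimal_def by blast
  have le: "\<rho>s k \<le> m k" if "k \<in> K" for k
  proof -
    have "\<forall>t\<in>T k. \<rho>s k \<le> C qs k t" using feas that unfolding nmp_feasible_def by auto
    then show ?thesis using fT[OF that] that unfolding m_def by (simp add: Min_ge_iff)
  qed
  have mle: "m k \<le> C qs k t" if "k \<in> K" "t \<in> T k" for k t
    using fT[OF that(1)] that unfolding m_def by (simp add: Min_le_iff)
  have rnn: "\<rho>s k \<ge> 0" if "k \<in> K" for k using feas that unfolding nmp_feasible_def by auto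
  have feas2: "nmp_feasible K T D C qs m"
    using feas mle le rnn unfolding nmp_feasible_def
    by (smt (verit) m_def)
  hence "zeta K T C qs \<rho>s \<le> zeta K T C qs m" using opt unfolding nmp_optimal_def by blast
  moreover have "zeta K T C qs m = zeta K T C qs \<rho>s - (\<Sum>k\<in>K. (m k - \<rho>s k) * D k)"
  proof -
    have "(\<Sum>t\<in>T k. (C qs k t - m k) * qs k t) = (\<Sum>t\<in>T k. (C qs k t - \<rho>s k) * qs k t) - (m k - \<rho>s k) * D k"
      if "k \<in> K" for k
    proof -
      have "D k = (\<Sum>t\<in>T k. qs k t)" using feas that unfolding nmp_feasible_def by auto
      then have "(m k - \<rho>s k) * D k = (\<Sum>t\<in>T k. (m k - \<rho>s k) * qs k t)" by (simp add: sum_distrib_left)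
      then show ?thesis by (simp add: sum_subtractf[symmetric] algebra_simps)
    qed
    then show ?thesis unfolding zeta_def by (simp add: sum_subtractf[symmetric])
  qed
  ultimately have "(\<Sum>k\<in>K. (m k - \<rho>s k) * D k) \<le> 0" by linarith
  moreover have nn: "\<forall>k\<in>K. 0 \<le> (m k - \<rho>s k) * D k" using le Dp by (simp add: less_imp_le)
  ultimately have "\<forall>k\<in>K. (m k - \<rho>s k) * D k = 0"
    using sum_nonneg_eq_0_iff[OF fK] by (smt (verit) sum_nonneg)
  then show ?thesis using Dp unfolding m_def by (smt (verit) mult_eq_0_iff)
qed

end
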